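(* Let $X$ be a semigroup. If all idempotents of the semigroup $\beta(X)$ commute, then every cyclic subsemigroup of $X$ and every linear subsemigroup of $X$ is finite.
   Context: $\beta(X)$ is the set of all ultrafilters on $X$, with each $x\in X$ identified with the principal ultrafilter $\langle x\rangle=\{A\subset X:x\in A\}$, endowed with the operation $\mathcal A*\mathcal B=\big\langle \bigcup_{a\in A} a*B_a : A\in\mathcal A,\ \{B_a\}_{a\in A}\subset\mathcal B\big\rangle$, where $\langle\mathcal C\rangle=\{A\subset X:\exists C\in\mathcal C,\ C\subset A\}$ (this makes $\beta(X)$ a semigroup). A semigroup $S$ is cyclic if $S=\{x^n:n\in\mathbb N\}$ for some $x\in S$; linear if $xy\in\{x,y\}$ for all $x,y\in S$. *)

theory Defs
  imports Main
begin

text \<open>The semigroup X is the whole carrier of a type of class semigroup_mult.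
  Ultrafilters on X are represented as sets of subsets of X.\<close>

definition is_ultrafilter :: "'a set set \<Rightarrow> bool" where
  "is_ultrafilter U \<longleftrightarrow>
     UNIV \<in> U \<and> {} \<notin> U \<and>
     (\<forall>A B. A \<in> U \<and> A \<subseteq> B \<longrightarrow> B \<in> U) \<and>
     (\<forall>A B. A \<in> U \<and> B \<in> U \<longrightarrow> A \<inter> B \<in> U) \<and>
     (\<forall>A. A \<in> U \<or> - A \<in> U)"

definition ult_mult :: "'a::semigroup_mult set set \<Rightarrow> 'a set set \<Rightarrow> 'a set set" where
  "ult_mult P Q = {C. \<exists>A\<in>P. \<exists>B. (\<forall>a\<in>A. B a \<in> Q) \<and>
                        (\<Union>a\<in>A. (\<lambda>b. a * b) ` B a) \<subseteq> C}"

definition ult_idempotent :: "'a::semigroup_mult set set \<Rightarrow> bool" where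
  "ult_idempotent p \<longleftrightarrow> is_ultrafilter p \<and> ult_mult p p = p"

text \<open>spow x n = x^(n+1).\<close>

fun spow :: "'a::semigroup_mult \<Rightarrow> nat \<Rightarrow> 'a" where
  "spow x 0 = x"
| "spow x (Suc n) = spow x n * x"

definition subsemigroup :: "'a::semigroup_mult set \<Rightarrow> bool" where
  "subsemigroup S \<longleftrightarrow> (\<forall>x\<in>S. \<forall>y\<in>S. x * y \<in> S)"

definition cyclic_semigroup :: "'a::semigroup_mult set \<Rightarrow> bool" where
  "cyclic_semigroup S \<longleftrightarrow> (\<exists>x\<in>S. S = range (spow x))"

definition linear_semigroup :: "'a::semigroup_mult set \<Rightarrow> bool" where
  "linear_semigroup S \<longleftrightarrow> (\<forall>x\<in>S. \<forall>y\<in>S. x * y \<in> {x, y})"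

end

theory Submission
  imports Defs "HOL-Library.Ramsey"
begin


definition is_filt :: "'a set set \<Rightarrow> bool" where
  "is_filt F \<longleftrightarrow> UNIV \<in> F \<and> (\<forall>A B. A \<in> F \<and> A \<subseteq> B \<longrightarrow> B \<in> F) \<and> (\<forall>A B. A \<in> F \<and> B \<in> F \<longrightarrow> A \<inter> B \<in> F)"

lemma uf_up: "is_ultrafilter U \<Longrightarrow> A \<in> U \<Longrightarrow> A \<subseteq> B \<Longrightarrow> B \<in> U"
  unfolding is_ultrafilter_def by blast
lemma uf_int: "is_ultrafilter U \<Longrightarrow> A \<inter> B \<in> U \<longleftrightarrow> A \<in> U \<and> B \<in> U"
  unfolding is_ultrafilter_def by (metis Int_lower1 Int_lower2)
lemma uf_compl: "is_ultrafilter U \<Longrightarrow> - A \<in> U \<longleftrightarrow> A \<notin> U"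
  unfolding is_ultrafilter_def by (metis Int_commute Compl_disjoint)
lemma uf_empty: "is_ultrafilter U \<Longrightarrow> {} \<notin> U"
  unfolding is_ultrafilter_def by blast
lemma uf_UNIV: "is_ultrafilter U \<Longrightarrow> UNIV \<in> U"
  unfolding is_ultrafilter_def by blast
lemma uf_eq: assumes "is_ultrafilter p" "is_ultrafilter q" "p \<subseteq> q" shows "p = q"
proof
  show "q \<subseteq> p"
  proof
    fix X assume "X \<in> q"
    show "X \<in> p"
    proof (rule ccontr)
      assume "X \<notin> p" then have "-X \<in> q" using assms uf_compl by blast
      then show False using \<open>X \<in> q\<close> uf_compl assms(2) by blast
    qed
  qed
qed (rule assms(3))

lemma uf_filt: "is_ultrafilter U \<Longrightarrow> is_filt U"
  unfolding is_ultrafilter_def is_filt_def by blast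

lemma uf_exists:
  assumes ne: "F \<noteq> {}" and emp: "{} \<notin> F" and dir: "\<And>A B. A \<in> F \<Longrightarrow> B \<in> F \<Longrightarrow> \<exists>C\<in>F. C \<subseteq> A \<inter> B"
  shows "\<exists>p. is_ultrafilter p \<and> F \<subseteq> p"
proof -
  define G0 where "G0 = {X. \<exists>B\<in>F. B \<subseteq> X}"
  define \<M> where "\<M> = {G. F \<subseteq> G \<and> is_filt G \<and> {} \<notin> G}"
  have G0: "G0 \<in> \<M>"
  proof -
    have "F \<subseteq> G0" unfolding G0_def by blast
    moreover have "{} \<notin> G0" unfolding G0_def using emp subset_empty by auto
    moreover have "UNIV \<in> G0" unfolding G0_def using ne by blast
    moreover have "\<forall>A B. A \<in> G0 \<and> A \<subseteq> B \<longrightarrow> B \<in> G0" unfolding G0_def by blast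
    moreover have "\<forall>A B. A \<in> G0 \<and> B \<in> G0 \<longrightarrow> A \<inter> B \<in> G0"
    proof (intro allI impI)
      fix A B assume "A \<in> G0 \<and> B \<in> G0"
      then obtain A' B' where "A' \<in> F" "B' \<in> F" "A' \<subseteq> A" "B' \<subseteq> B" unfolding G0_def by blast
      then obtain C where "C \<in> F" "C \<subseteq> A' \<inter> B'" using dir by blast
      then show "A \<inter> B \<in> G0" unfolding G0_def using \<open>A' \<subseteq> A\<close> \<open>B' \<subseteq> B\<close> by blast
    qed
    ultimately show ?thesis unfolding \<M>_def is_filt_def by blast
  qed
  have "\<forall>C\<in>chains \<M>. \<exists>U\<in>\<M>. \<forall>X\<in>C. X \<subseteq> U"
  proof
    fix C assume C: "C \<in> chains \<M>"
    show "\<exists>U\<in>\<M>. \<forall>X\<in>C. X \<subseteq> U"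
    proof (cases "C = {}")
      case True then show ?thesis using G0 by blast
    next
      case False
      have sub: "C \<subseteq> \<M>" and ch: "\<forall>A\<in>C. \<forall>B\<in>C. A \<subseteq> B \<or> B \<subseteq> A"
        using C unfolding chains_def chain_subset_def by auto
      have "\<Union>C \<in> \<M>"
        unfolding \<M>_def is_filt_def
      proof (intro CollectI conjI allI impI)
        show "F \<subseteq> \<Union>C" using False sub unfolding \<M>_def by blast
        show "UNIV \<in> \<Union>C" using False sub unfolding \<M>_def is_filt_def by blast
        show "{} \<notin> \<Union>C" using sub unfolding \<M>_def by blast
        fix A B
        show "A \<in> \<Union>C \<and> A \<subseteq> B \<Longrightarrow> B \<in> \<Union>C" using sub unfolding \<M>_def is_filt_def by blast
        assume "A \<in> \<Union>C \<and> B \<in> \<Union>C"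
        then obtain X Y where "X \<in> C" "Y \<in> C" "A \<in> X" "B \<in> Y" by blast
        have "\<And>Z. Z \<in> C \<Longrightarrow> is_filt Z" using sub unfolding \<M>_def by blast
        then have "\<And>Z. Z \<in> C \<Longrightarrow> A \<in> Z \<Longrightarrow> B \<in> Z \<Longrightarrow> A \<inter> B \<in> Z" unfolding is_filt_def by blast
        moreover have "A \<in> Y \<and> B \<in> Y \<or> A \<in> X \<and> B \<in> X" using ch \<open>X \<in> C\<close> \<open>Y \<in> C\<close> \<open>A \<in> X\<close> \<open>B \<in> Y\<close> by blast
        ultimately show "A \<inter> B \<in> \<Union>C" using \<open>X \<in> C\<close> \<open>Y \<in> C\<close> by blast
      qed
      then show ?thesis by blast
    qed
  qed
  from Zorn_Lemma2[OF this] obtain M where M: "M \<in> \<M>" and max: "\<And>X. X \<in> \<M> \<Longrightarrow> M \<subseteq> X \<Longrightarrow> X = M"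
    by blast
  have Mf: "F \<subseteq> M" "is_filt M" "{} \<notin> M" using M unfolding \<M>_def by auto
  have "A \<in> M \<or> - A \<in> M" for A
  proof (rule ccontr)
    assume nA: "\<not> (A \<in> M \<or> - A \<in> M)"
    define M' where "M' = {X. \<exists>B\<in>M. B \<inter> A \<subseteq> X}"
    have "M' \<in> \<M>"
      unfolding \<M>_def M'_def
    proof (intro CollectI conjI)
      show "F \<subseteq> {X. \<exists>B\<in>M. B \<inter> A \<subseteq> X}" using Mf by blast
      have m1: "UNIV \<in> M" and m2: "\<And>X Y. X \<in> M \<Longrightarrow> Y \<in> M \<Longrightarrow> X \<inter> Y \<in> M"
        using Mf(2) unfolding is_filt_def by blast+
      show "is_filt {X. \<exists>B\<in>M. B \<inter> A \<subseteq> X}" unfolding is_filt_def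
      proof (intro conjI allI impI)
        show "UNIV \<in> {X. \<exists>B\<in>M. B \<inter> A \<subseteq> X}" using m1 by blast
        fix X Y
        show "X \<in> {X. \<exists>B\<in>M. B \<inter> A \<subseteq> X} \<and> X \<subseteq> Y \<Longrightarrow> Y \<in> {X. \<exists>B\<in>M. B \<inter> A \<subseteq> X}" by blast
        assume "X \<in> {X. \<exists>B\<in>M. B \<inter> A \<subseteq> X} \<and> Y \<in> {X. \<exists>B\<in>M. B \<inter> A \<subseteq> X}"
        then obtain B1 B2 where "B1 \<in> M" "B2 \<in> M" "B1 \<inter> A \<subseteq> X" "B2 \<inter> A \<subseteq> Y" by blast
        then show "X \<inter> Y \<in> {X. \<exists>B\<in>M. B \<inter> A \<subseteq> X}" using m2[of B1 B2] by blast
      qed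
      show "{} \<notin> {X. \<exists>B\<in>M. B \<inter> A \<subseteq> X}"
      proof
        assume "{} \<in> {X. \<exists>B\<in>M. B \<inter> A \<subseteq> X}"
        then obtain B where "B \<in> M" "B \<subseteq> -A" by auto
        then show False using nA Mf(2) unfolding is_filt_def by blast
      qed
    qed
    moreover have "M \<subseteq> M'" unfolding M'_def by blast
    ultimately have "M' = M" using max by blast
    moreover have "A \<in> M'" unfolding M'_def using Mf(2) unfolding is_filt_def by blast
    ultimately show False using nA by blast
  qed
  then have "is_ultrafilter M" using Mf unfolding is_ultrafilter_def is_filt_def by blast
  then show ?thesis using Mf by blast
qed



definition lsh :: "'a::semigroup_mult set \<Rightarrow> 'a \<Rightarrow> 'a set" where
  "lsh C a = {b. a * b \<in> C}"

definition ucl :: "'a set set \<Rightarrow> 'a set set set" where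
  "ucl F = {p. is_ultrafilter p \<and> F \<subseteq> p}"

definition sgcl :: "'a::semigroup_mult set set set \<Rightarrow> bool" where
  "sgcl T \<longleftrightarrow> (\<forall>p\<in>T. \<forall>q\<in>T. ult_mult p q \<in> T)"

lemma mult_mem:
  assumes "is_ultrafilter p" "is_ultrafilter q"
  shows "C \<in> ult_mult p q \<longleftrightarrow> {a. lsh C a \<in> q} \<in> p"
proof
  assume "C \<in> ult_mult p q"
  then obtain A B where A: "A \<in> p" "\<forall>a\<in>A. B a \<in> q" "(\<Union>a\<in>A. (\<lambda>b. a * b) ` B a) \<subseteq> C"
    unfolding ult_mult_def by (auto simp only: mem_Collect_eq)
  have "A \<subseteq> {a. lsh C a \<in> q}"
  proof
    fix a assume "a \<in> A"
    then have "B a \<subseteq> lsh C a" using A(3) unfolding lsh_def by blast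
    then show "a \<in> {a. lsh C a \<in> q}" using A(2) \<open>a \<in> A\<close> uf_up[OF assms(2)] by blast
  qed
  then show "{a. lsh C a \<in> q} \<in> p" using uf_up[OF assms(1)] A(1) by blast
next
  assume "{a. lsh C a \<in> q} \<in> p"
  moreover have "(\<Union>a\<in>{a. lsh C a \<in> q}. (\<lambda>b. a * b) ` lsh C a) \<subseteq> C" unfolding lsh_def by blast
  moreover have "\<forall>a\<in>{a. lsh C a \<in> q}. lsh C a \<in> q" by blast
  ultimately show "C \<in> ult_mult p q" unfolding ult_mult_def
    by (intro CollectI bexI[of _ "{a. lsh C a \<in> q}"] exI[of _ "lsh C"] conjI)
qed

lemma mult_uf:
  assumes p: "is_ultrafilter p" and q: "is_ultrafilter q"
  shows "is_ultrafilter (ult_mult p q)"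
proof -
  note mm = mult_mem[OF p q]
  have 1: "UNIV \<in> ult_mult p q" unfolding mm lsh_def using uf_UNIV[OF p] uf_UNIV[OF q] by simp
  have 2: "{} \<notin> ult_mult p q" unfolding mm lsh_def using uf_empty[OF p] uf_empty[OF q] by simp
  have 3: "B \<in> ult_mult p q" if "A \<in> ult_mult p q" "A \<subseteq> B" for A B
  proof -
    have "{a. lsh A a \<in> q} \<subseteq> {a. lsh B a \<in> q}"
      proof
      fix a assume "a \<in> {a. lsh A a \<in> q}"
      moreover have "lsh A a \<subseteq> lsh B a" using that(2) unfolding lsh_def by blast
      ultimately show "a \<in> {a. lsh B a \<in> q}" using uf_up[OF q] by blast
    qed
    then show ?thesis using that(1) uf_up[OF p] unfolding mm by blast
  qed
  have 4: "A \<inter> B \<in> ult_mult p q" if "A \<in> ult_mult p q" "B \<in> ult_mult p q" for A B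
  proof -
    have "lsh (A \<inter> B) a = lsh A a \<inter> lsh B a" for a unfolding lsh_def by auto
    then have "{a. lsh (A \<inter> B) a \<in> q} = {a. lsh A a \<in> q} \<inter> {a. lsh B a \<in> q}" using uf_int[OF q] by auto
    then show ?thesis using that uf_int[OF p] unfolding mm by simp
  qed
  have 5: "A \<in> ult_mult p q \<or> - A \<in> ult_mult p q" for A
  proof -
    have "lsh (- A) a = - lsh A a" for a unfolding lsh_def by auto
    then have "{a. lsh (- A) a \<in> q} = - {a. lsh A a \<in> q}" using uf_compl[OF q] by auto
    then show ?thesis using uf_compl[OF p] unfolding mm by simp
  qed
  show ?thesis unfolding is_ultrafilter_def using 1 2 3 4 5 by blast
qed

lemma mult_assoc_uf:
  assumes p: "is_ultrafilter p" and q: "is_ultrafilter q" and r: "is_ultrafilter r"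
  shows "ult_mult (ult_mult p q) r = ult_mult p (ult_mult q r)"
proof -
  have pq: "is_ultrafilter (ult_mult p q)" and qr: "is_ultrafilter (ult_mult q r)" using mult_uf assms by auto
  have "C \<in> ult_mult (ult_mult p q) r \<longleftrightarrow> C \<in> ult_mult p (ult_mult q r)" for C
  proof -
    have e: "lsh {x. lsh C x \<in> r} a = {b. lsh (lsh C a) b \<in> r}" for a
      unfolding lsh_def by (simp add: mult.assoc)
    have "C \<in> ult_mult (ult_mult p q) r \<longleftrightarrow> {x. lsh C x \<in> r} \<in> ult_mult p q"
      by (rule mult_mem[OF pq r])
    also have "\<dots> \<longleftrightarrow> {a. lsh {x. lsh C x \<in> r} a \<in> q} \<in> p"
      by (rule mult_mem[OF p q])
    also have "\<dots> \<longleftrightarrow> {a. {b. lsh (lsh C a) b \<in> r} \<in> q} \<in> p"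
      by (simp only: e)
    also have "{a. {b. lsh (lsh C a) b \<in> r} \<in> q} = {a. lsh C a \<in> ult_mult q r}"
      using mult_mem[OF q r] by blast
    also have "\<dots> \<in> p \<longleftrightarrow> C \<in> ult_mult p (ult_mult q r)"
      using mult_mem[OF p qr] by blast
    finally show ?thesis .
  qed
  then show ?thesis by blast
qed

definition filt :: "'a set set \<Rightarrow> 'a set set" where
  "filt F = {A. \<forall>p\<in>ucl F. A \<in> p}"

lemma ucl_filt: "ucl (filt F) = ucl F"
  unfolding ucl_def filt_def by blast

lemma filt_is: "is_filt (filt F)"
  unfolding is_filt_def
proof (intro conjI allI impI)
  show "UNIV \<in> filt F" unfolding filt_def ucl_def using uf_UNIV by blast
  fix A B
  show "A \<in> filt F \<and> A \<subseteq> B \<Longrightarrow> B \<in> filt F" unfolding filt_def ucl_def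
    by (auto intro: uf_up)
  show "A \<in> filt F \<and> B \<in> filt F \<Longrightarrow> A \<inter> B \<in> filt F" unfolding filt_def ucl_def
    by (auto simp: uf_int)
qed

lemma filt_sup: "F \<subseteq> filt F"
  unfolding filt_def ucl_def by blast

lemma ucl_ne:
  assumes "is_filt M" "{} \<notin> M" shows "ucl M \<noteq> {}"
proof -
  have "\<exists>p. is_ultrafilter p \<and> M \<subseteq> p"
  proof (rule uf_exists)
    show "M \<noteq> {}" "{} \<notin> M" using assms unfolding is_filt_def by blast+
    fix A B assume "A \<in> M" "B \<in> M" then have "A \<inter> B \<in> M" using assms unfolding is_filt_def by blast
    then show "\<exists>C\<in>M. C \<subseteq> A \<inter> B" by blast
  qed
  then show ?thesis unfolding ucl_def by blast
qed

lemma rep_lemma: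
  fixes p :: "'a::semigroup_mult set set"
  assumes p: "is_ultrafilter p" and M: "is_filt M"
    and r: "is_ultrafilter r" and rG: "{C. \<forall>q\<in>ucl M. C \<in> ult_mult q p} \<subseteq> r"
  shows "\<exists>q\<in>ucl M. r = ult_mult q p"
proof -
  define H where "H = {A \<inter> {a. lsh C a \<in> p} | A C. A \<in> M \<and> C \<in> r}"
  have hH: "A \<inter> {a. lsh C a \<in> p} \<in> H" if "A \<in> M" "C \<in> r" for A C
    unfolding H_def using that by blast
  have MU: "UNIV \<in> M" and MI: "\<And>X Y. X \<in> M \<Longrightarrow> Y \<in> M \<Longrightarrow> X \<inter> Y \<in> M" using M unfolding is_filt_def by blast+
  have "\<exists>q. is_ultrafilter q \<and> H \<subseteq> q"
  proof (rule uf_exists)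
    show "H \<noteq> {}" using hH[OF MU uf_UNIV[OF r]] by blast
    show "{} \<notin> H"
    proof
      assume "{} \<in> H"
      then obtain A C where AC: "A \<in> M" "C \<in> r" "A \<inter> {a. lsh C a \<in> p} = {}" unfolding H_def by auto
      have "- C \<in> ult_mult q p" if "q \<in> ucl M" for q
      proof -
        have q: "is_ultrafilter q" "A \<in> q" using that AC(1) unfolding ucl_def by auto
        have "{a. lsh C a \<in> p} \<notin> q" 
        proof
          assume "{a. lsh C a \<in> p} \<in> q"
          then have "A \<inter> {a. lsh C a \<in> p} \<in> q" using uf_int[OF q(1)] q(2) by blast
          then show False using AC(3) uf_empty[OF q(1)] by simp
        qed
        then have "C \<notin> ult_mult q p" using mult_mem[OF q(1) p] by blast
        then show ?thesis using uf_compl[OF mult_uf[OF q(1) p]] by blast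
      qed
      then have "- C \<in> r" using rG by blast
      then show False using AC(2) uf_compl[OF r] by blast
    qed
    fix X Y assume "X \<in> H" "Y \<in> H"
    obtain A C where X: "X = A \<inter> {a. lsh C a \<in> p}" "A \<in> M" "C \<in> r"
      using \<open>X \<in> H\<close> unfolding H_def by blast
    obtain A' C' where Y: "Y = A' \<inter> {a. lsh C' a \<in> p}" "A' \<in> M" "C' \<in> r"
      using \<open>Y \<in> H\<close> unfolding H_def by blast
    have "A \<inter> A' \<in> M" using MI X Y by blast
    moreover have "C \<inter> C' \<in> r" using uf_int[OF r] X Y by blast
    moreover have "lsh (C \<inter> C') a = lsh C a \<inter> lsh C' a" for a unfolding lsh_def by auto
    ultimately have "(A \<inter> A') \<inter> {a. lsh (C \<inter> C') a \<in> p} \<in> H" "(A \<inter> A') \<inter> {a. lsh (C \<inter> C') a \<in> p} \<subseteq> X \<inter> Y"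
      using hH apply blast
      unfolding X Y using uf_int[OF p] \<open>\<And>a. lsh (C \<inter> C') a = _\<close> by auto
    then show "\<exists>Z\<in>H. Z \<subseteq> X \<inter> Y" by blast
  qed
  then obtain q where q: "is_ultrafilter q" "H \<subseteq> q" by blast
  have lU: "lsh UNIV a = UNIV" for a :: 'a unfolding lsh_def by auto
  have "A \<in> q" if "A \<in> M" for A
  proof -
    have "A \<inter> {a. lsh UNIV a \<in> p} \<in> H" using hH that uf_UNIV[OF r] by blast
    then show ?thesis using q uf_up[OF q(1)] by blast
  qed
  then have qM: "q \<in> ucl M" unfolding ucl_def using q by blast
  have "r \<subseteq> ult_mult q p"
  proof
    fix C assume "C \<in> r"
    then have "UNIV \<inter> {a. lsh C a \<in> p} \<in> H" using hH MU by blast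
    then have "{a. lsh C a \<in> p} \<in> q" using q by auto
    then show "C \<in> ult_mult q p" using mult_mem[OF q(1) p] by blast
  qed
  then have "r = ult_mult q p" using uf_eq[OF r mult_uf[OF q(1) p]] by blast
  then show ?thesis using qM by blast
qed



lemma ucl_fix:
  assumes p: "is_ultrafilter p"
  shows "q \<in> ucl (M \<union> {{a. lsh C a \<in> p} | C. C \<in> p}) \<longleftrightarrow> q \<in> ucl M \<and> ult_mult q p = p"
proof
  assume q: "q \<in> ucl (M \<union> {{a. lsh C a \<in> p} | C. C \<in> p})"
  then have qu: "is_ultrafilter q" and "M \<subseteq> q" unfolding ucl_def by auto
  then have "q \<in> ucl M" unfolding ucl_def by blast
  moreover have "p \<subseteq> ult_mult q p"
  proof
    fix C assume "C \<in> p"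
    then have "{a. lsh C a \<in> p} \<in> q" using q unfolding ucl_def by blast
    then show "C \<in> ult_mult q p" using mult_mem[OF qu p] by blast
  qed
  then have "ult_mult q p = p" using uf_eq[OF p mult_uf[OF qu p]] by simp
  ultimately show "q \<in> ucl M \<and> ult_mult q p = p" by blast
next
  assume a: "q \<in> ucl M \<and> ult_mult q p = p"
  then have qu: "is_ultrafilter q" and "M \<subseteq> q" unfolding ucl_def by auto
  moreover have "{a. lsh C a \<in> p} \<in> q" if "C \<in> p" for C
    using that a mult_mem[OF qu p] by metis
  ultimately show "q \<in> ucl (M \<union> {{a. lsh C a \<in> p} | C. C \<in> p})" unfolding ucl_def by blast
qed

lemma EN:
  fixes F0 :: "'a::semigroup_mult set set"
  assumes ne: "ucl F0 \<noteq> {}" and sg: "sgcl (ucl F0)"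
  shows "\<exists>p\<in>ucl F0. ult_mult p p = p"
proof -
  define \<A> where "\<A> = {F. is_filt F \<and> F0 \<subseteq> F \<and> ucl F \<noteq> {} \<and> sgcl (ucl (F :: 'a set set))}"
  have "\<forall>C\<in>chains \<A>. \<exists>U\<in>\<A>. \<forall>X\<in>C. X \<subseteq> U"
  proof
    fix C assume C: "C \<in> chains \<A>"
    show "\<exists>U\<in>\<A>. \<forall>X\<in>C. X \<subseteq> U"
    proof (cases "C = {}")
      case True
      have "filt F0 \<in> \<A>" unfolding \<A>_def using filt_is[of F0] filt_sup[of F0] ucl_filt[of F0] ne sg by simp
      then show ?thesis using True by blast
    next
      case False
      have sub: "C \<subseteq> \<A>" and ch: "\<forall>A\<in>C. \<forall>B\<in>C. A \<subseteq> B \<or> B \<subseteq> A"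
        using C unfolding chains_def chain_subset_def by auto
      have filtU: "is_filt (\<Union>C)"
        unfolding is_filt_def
      proof (intro conjI allI impI)
        show "UNIV \<in> \<Union>C" using False sub unfolding \<A>_def is_filt_def by blast
        fix A B
        show "A \<in> \<Union>C \<and> A \<subseteq> B \<Longrightarrow> B \<in> \<Union>C" using sub unfolding \<A>_def is_filt_def by blast
        assume "A \<in> \<Union>C \<and> B \<in> \<Union>C"
        then obtain X Y where "X \<in> C" "Y \<in> C" "A \<in> X" "B \<in> Y" by blast
        have "\<And>Z. Z \<in> C \<Longrightarrow> is_filt Z" using sub unfolding \<A>_def by blast
        then have "\<And>Z. Z \<in> C \<Longrightarrow> A \<in> Z \<Longrightarrow> B \<in> Z \<Longrightarrow> A \<inter> B \<in> Z" unfolding is_filt_def by blast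
        moreover have "A \<in> Y \<and> B \<in> Y \<or> A \<in> X \<and> B \<in> X" using ch \<open>X \<in> C\<close> \<open>Y \<in> C\<close> \<open>A \<in> X\<close> \<open>B \<in> Y\<close> by blast
        ultimately show "A \<inter> B \<in> \<Union>C" using \<open>X \<in> C\<close> \<open>Y \<in> C\<close> by blast
      qed
      have "{} \<notin> \<Union>C"
      proof
        assume "{} \<in> \<Union>C"
        then obtain F where F: "F \<in> C" "{} \<in> F" by blast
        then have "ucl F \<noteq> {}" using sub unfolding \<A>_def by blast
        then obtain p where "is_ultrafilter p" "F \<subseteq> p" unfolding ucl_def by blast
        then show False using F uf_empty by blast
      qed
      then have uclU: "ucl (\<Union>C) \<noteq> {}" using ucl_ne filtU by blast
      have "sgcl (ucl (\<Union>C))" unfolding sgcl_def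
      proof (intro ballI)
        fix p q assume pq: "p \<in> ucl (\<Union>C)" "q \<in> ucl (\<Union>C)"
        then have pu: "is_ultrafilter p" "is_ultrafilter q" unfolding ucl_def by auto
        have "F \<subseteq> ult_mult p q" if "F \<in> C" for F
        proof -
          have "p \<in> ucl F" "q \<in> ucl F" using pq that unfolding ucl_def by auto
          moreover have "sgcl (ucl F)" using sub that unfolding \<A>_def by blast
          ultimately show ?thesis unfolding sgcl_def ucl_def by blast
        qed
        then show "ult_mult p q \<in> ucl (\<Union>C)" unfolding ucl_def using mult_uf[OF pu] by blast
      qed
      moreover have "F0 \<subseteq> \<Union>C" using False sub unfolding \<A>_def by blast
      ultimately have "\<Union>C \<in> \<A>" unfolding \<A>_def using filtU uclU by blast
      then show ?thesis by blast
    qed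
  qed
  from Zorn_Lemma2[OF this] obtain M where M: "M \<in> \<A>" and max: "\<And>X. X \<in> \<A> \<Longrightarrow> M \<subseteq> X \<Longrightarrow> X = M"
    by blast
  have Mf: "is_filt M" "F0 \<subseteq> M" "ucl M \<noteq> {}" "sgcl (ucl M)" using M unfolding \<A>_def by auto
  have maxcl: "ucl G = ucl M" if "M \<subseteq> G" "ucl G \<noteq> {}" "sgcl (ucl G)" for G
  proof -
    have "F0 \<subseteq> filt G" using Mf(2) that(1) filt_sup[of G] by blast
    then have "filt G \<in> \<A>" unfolding \<A>_def using that filt_is[of G] ucl_filt[of G] by simp
    moreover have "M \<subseteq> filt G" using that(1) filt_sup by blast
    ultimately have "filt G = M" using max by blast
    then show ?thesis using ucl_filt[of G] by simp
  qed
  obtain p where pM: "p \<in> ucl M" using Mf(3) by blast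
  have pu: "is_ultrafilter p" using pM unfolding ucl_def by blast
  have ucM: "ult_mult a b \<in> ucl M" if "a \<in> ucl M" "b \<in> ucl M" for a b
    using Mf(4) that unfolding sgcl_def by blast
  have uM: "is_ultrafilter a" if "a \<in> ucl M" for a using that unfolding ucl_def by blast
  define G where "G = {C. \<forall>q\<in>ucl M. C \<in> ult_mult q p}"
  have MG: "M \<subseteq> G" unfolding G_def using ucM pM unfolding ucl_def by blast
  have "G \<subseteq> ult_mult p p" using pM unfolding G_def by blast
  then have "ult_mult p p \<in> ucl G" unfolding ucl_def using mult_uf[OF pu pu] by blast
  then have Gne: "ucl G \<noteq> {}" by blast
  have "sgcl (ucl G)" unfolding sgcl_def
  proof (intro ballI)
    fix r1 r2 assume r: "r1 \<in> ucl G" "r2 \<in> ucl G"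
    then have ru: "is_ultrafilter r1" "is_ultrafilter r2" unfolding ucl_def by auto
    obtain q2 where q2: "q2 \<in> ucl M" "r2 = ult_mult q2 p"
      using rep_lemma[OF pu Mf(1) ru(2)] r(2) unfolding ucl_def G_def by blast
    have r1M: "r1 \<in> ucl M" using r(1) MG unfolding ucl_def by blast
    have "ult_mult r1 r2 = ult_mult (ult_mult r1 q2) p"
      using q2(2) mult_assoc_uf[OF ru(1) uM[OF q2(1)] pu] by simp
    moreover have "ult_mult r1 q2 \<in> ucl M" using ucM r1M q2(1) by blast
    ultimately have "G \<subseteq> ult_mult r1 r2" unfolding G_def by auto
    then show "ult_mult r1 r2 \<in> ucl G" unfolding ucl_def using mult_uf[OF ru] by blast
  qed
  then have "ucl G = ucl M" using maxcl MG Gne by blast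
  then have "p \<in> ucl G" using pM by simp
  then obtain q0 where q0: "q0 \<in> ucl M" "p = ult_mult q0 p"
    using rep_lemma[OF pu Mf(1) pu] unfolding ucl_def G_def by blast
  define G2 where "G2 = M \<union> {{a. lsh C a \<in> p} | C. C \<in> p}"
  have G2: "q \<in> ucl G2 \<longleftrightarrow> q \<in> ucl M \<and> ult_mult q p = p" for q
    unfolding G2_def by (rule ucl_fix[OF pu])
  have "ucl G2 \<noteq> {}" using G2[of q0] q0 by auto
  moreover have "M \<subseteq> G2" unfolding G2_def by blast
  moreover have "sgcl (ucl G2)" unfolding sgcl_def
  proof (intro ballI)
    fix q1 q2 assume "q1 \<in> ucl G2" "q2 \<in> ucl G2"
    then have q: "q1 \<in> ucl M" "q2 \<in> ucl M" "ult_mult q1 p = p" "ult_mult q2 p = p" using G2 by auto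
    have "ult_mult (ult_mult q1 q2) p = p"
      using mult_assoc_uf[OF uM[OF q(1)] uM[OF q(2)] pu] q by simp
    then show "ult_mult q1 q2 \<in> ucl G2" using G2 ucM q by blast
  qed
  ultimately have "ucl G2 = ucl M" using maxcl by blast
  then have "ult_mult p p = p" using G2 pM by blast
  moreover have "p \<in> ucl F0" using pM Mf(2) unfolding ucl_def by blast
  ultimately show ?thesis by blast
qed



lemma L0:
  fixes k :: "nat \<Rightarrow> 'a::semigroup_mult"
  assumes u: "is_ultrafilter u" and v: "is_ultrafilter v" and rk: "range k \<in> u"
    and tl: "\<And>i. k ` {n. i < n} \<in> v" and m: "\<And>i j. i < j \<Longrightarrow> k i * k j = k i"
  shows "ult_mult u v = u"
proof -
  have "u \<subseteq> ult_mult u v"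
  proof
    fix C assume C: "C \<in> u"
    have "C \<inter> range k \<subseteq> {a. lsh C a \<in> v}"
    proof
      fix a assume "a \<in> C \<inter> range k"
      then obtain i where a: "a = k i" "k i \<in> C" by blast
      have "k ` {n. i < n} \<subseteq> lsh C a" unfolding lsh_def using a m by auto
      then show "a \<in> {a. lsh C a \<in> v}" using tl uf_up[OF v] by blast
    qed
    moreover have "C \<inter> range k \<in> u" using uf_int[OF u] C rk by blast
    ultimately show "C \<in> ult_mult u v" using mult_mem[OF u v] uf_up[OF u] by blast
  qed
  then show ?thesis using uf_eq[OF u mult_uf[OF u v]] by simp
qed

lemma L1:
  fixes k :: "nat \<Rightarrow> 'a::semigroup_mult"
  assumes u: "is_ultrafilter u" and v: "is_ultrafilter v" and rk: "range k \<in> u"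
    and tl: "\<And>i. k ` {n. i < n} \<in> v" and m: "\<And>i j. i < j \<Longrightarrow> k i * k j = k j"
  shows "ult_mult u v = v"
proof -
  have "v \<subseteq> ult_mult u v"
  proof
    fix C assume C: "C \<in> v"
    have "range k \<subseteq> {a. lsh C a \<in> v}"
    proof
      fix a assume "a \<in> range k"
      then obtain i where a: "a = k i" by blast
      have "C \<inter> k ` {n. i < n} \<subseteq> lsh C a" unfolding lsh_def using a m by auto
      moreover have "C \<inter> k ` {n. i < n} \<in> v" using uf_int[OF v] C tl by blast
      ultimately show "a \<in> {a. lsh C a \<in> v}" using uf_up[OF v] by blast
    qed
    then show "C \<in> ult_mult u v" using mult_mem[OF u v] uf_up[OF u] rk by blast
  qed
  then show ?thesis using uf_eq[OF v mult_uf[OF u v]] by simp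
qed

lemma par_uf:
  fixes k :: "nat \<Rightarrow> 'a"
  assumes r: "r < 2"
  shows "\<exists>p. is_ultrafilter p \<and> (\<forall>m. k ` {n. m \<le> n \<and> n mod 2 = r} \<in> p)"
proof -
  have "\<exists>p. is_ultrafilter p \<and> range (\<lambda>m. k ` {n. m \<le> n \<and> n mod 2 = r}) \<subseteq> p"
  proof (rule uf_exists)
    show "range (\<lambda>m. k ` {n. m \<le> n \<and> n mod 2 = r}) \<noteq> {}" by blast
    show "{} \<notin> range (\<lambda>m. k ` {n. m \<le> n \<and> n mod 2 = r})"
    proof
      assume "{} \<in> range (\<lambda>m. k ` {n. m \<le> n \<and> n mod 2 = r})"
      then obtain m where "k ` {n. m \<le> n \<and> n mod 2 = r} = {}" by auto
      moreover have "2*m + r \<in> {n. m \<le> n \<and> n mod 2 = r}" using r by auto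
      ultimately show False by blast
    qed
    fix A B assume "A \<in> range (\<lambda>m. k ` {n. m \<le> n \<and> n mod 2 = r})" "B \<in> range (\<lambda>m. k ` {n. m \<le> n \<and> n mod 2 = r})"
    then obtain m m' where "A = k ` {n. m \<le> n \<and> n mod 2 = r}" "B = k ` {n. m' \<le> n \<and> n mod 2 = r}" by auto
    then have "k ` {n. max m m' \<le> n \<and> n mod 2 = r} \<subseteq> A \<inter> B" by auto
    then show "\<exists>C\<in>range (\<lambda>m. k ` {n. m \<le> n \<and> n mod 2 = r}). C \<subseteq> A \<inter> B" by blast
  qed
  then show ?thesis by blast
qed

lemma par_props:
  fixes k :: "nat \<Rightarrow> 'a" and r :: nat
  assumes u: "is_ultrafilter u" and P: "\<forall>m. k ` {n. m \<le> n \<and> n mod 2 = r} \<in> u"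
  shows "range k \<in> u" "\<And>i. k ` {n. i < n} \<in> u"
proof -
  show "range k \<in> u" using P uf_up[OF u, of "k ` {n. 0 \<le> n \<and> n mod 2 = r}"] by blast
  fix i show "k ` {n. i < n} \<in> u"
  proof -
    have "k ` {n. Suc i \<le> n \<and> n mod 2 = r} \<subseteq> k ` {n. i < n}" by auto
    then show ?thesis using P uf_up[OF u] by blast
  qed
qed

lemma linear_finite:
  fixes S :: "'a::semigroup_mult set"
  assumes H: "\<forall>p q :: 'a set set. ult_idempotent p \<and> ult_idempotent q
             \<longrightarrow> ult_mult p q = ult_mult q p"
    and lin: "linear_semigroup S"
  shows "finite S"
proof (rule ccontr)
  assume inf: "infinite S"
  obtain h :: "nat \<Rightarrow> 'a" where h: "inj h" "range h \<subseteq> S" using infinite_countable_subset[OF inf] by blast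
  define f where "f X = (if h (Min X) * h (Max X) = h (Min X) then 0 else (1::nat))" for X
  have "\<forall>x\<in>(UNIV::nat set). \<forall>y\<in>UNIV. x \<noteq> y \<longrightarrow> f {x, y} < 2" unfolding f_def by auto
  from Ramsey2[OF infinite_UNIV_nat this] obtain Y t where Y: "infinite Y" "t < 2"
    "\<forall>x\<in>Y. \<forall>y\<in>Y. x \<noteq> y \<longrightarrow> f {x, y} = t" by blast
  define k where "k = h \<circ> enumerate Y"
  have sm: "strict_mono (enumerate Y)" using strict_mono_enumerate[OF Y(1)] .
  have injk: "inj k" unfolding k_def using h(1) strict_mono_imp_inj_on[OF sm] by (simp add: inj_compose)
  have kS: "k i \<in> S" for i unfolding k_def using h(2) by auto
  have kt: "(k i * k j = k i) \<longleftrightarrow> t = 0" if "i < j" for i j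
  proof -
    have lt: "enumerate Y i < enumerate Y j" using sm that unfolding strict_mono_def by blast
    have "f {enumerate Y i, enumerate Y j} = t" using Y(3) enumerate_in_set[OF Y(1)] lt by auto
    moreover have "Min {enumerate Y i, enumerate Y j} = enumerate Y i" "Max {enumerate Y i, enumerate Y j} = enumerate Y j"
      using lt by auto
    ultimately show ?thesis unfolding f_def k_def by (auto split: if_splits)
  qed
  obtain p where p: "is_ultrafilter p" "\<forall>m. k ` {n. m \<le> n \<and> n mod 2 = 0} \<in> p" using par_uf[of 0 k] by auto
  obtain q where q: "is_ultrafilter q" "\<forall>m. k ` {n. m \<le> n \<and> n mod 2 = 1} \<in> q" using par_uf[of 1 k] by auto
  note pp = par_props[OF p] and qq = par_props[OF q]
  have "p \<noteq> q"
  proof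
    assume "p = q"
    then have "k ` {n. 0 \<le> n \<and> n mod 2 = 0} \<inter> k ` {n. 0 \<le> n \<and> n mod 2 = 1} \<in> p"
      using p q uf_int[OF p(1)] by blast
    moreover have "k ` {n. 0 \<le> n \<and> n mod 2 = 0} \<inter> k ` {n. 0 \<le> n \<and> n mod 2 = (1::nat)} = {}"
      by (auto simp: inj_eq[OF injk])
    ultimately show False using uf_empty[OF p(1)] by simp
  qed
  show False
  proof (cases "t = 0")
    case True
    then have m: "\<And>i j. i < j \<Longrightarrow> k i * k j = k i" using kt by blast
    have e: "ult_mult p p = p" "ult_mult q q = q" "ult_mult p q = p" "ult_mult q p = q"
      using L0[OF p(1) p(1) pp(1) pp(2) m] L0[OF q(1) q(1) qq(1) qq(2) m]
        L0[OF p(1) q(1) pp(1) qq(2) m] L0[OF q(1) p(1) qq(1) pp(2) m] by auto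
    then have "ult_idempotent p" "ult_idempotent q" unfolding ult_idempotent_def using p q by auto
    then show False using H e \<open>p \<noteq> q\<close> by metis
  next
    case False
    have m: "k i * k j = k j" if "i < j" for i j
    proof -
      have "k i * k j \<noteq> k i" using kt[OF that] False by blast
      moreover have "k i * k j \<in> {k i, k j}" using lin kS unfolding linear_semigroup_def by blast
      ultimately show ?thesis by blast
    qed
    have e: "ult_mult p p = p" "ult_mult q q = q" "ult_mult p q = q" "ult_mult q p = p"
      using L1[OF p(1) p(1) pp(1) pp(2) m] L1[OF q(1) q(1) qq(1) qq(2) m]
        L1[OF p(1) q(1) pp(1) qq(2) m] L1[OF q(1) p(1) qq(1) pp(2) m] by auto
    then have "ult_idempotent p" "ult_idempotent q" unfolding ult_idempotent_def using p q by auto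
    then show False using H e \<open>p \<noteq> q\<close> by metis
  qed
qed



lemma spow_add: "spow x m * spow x n = spow x (m + n + 1)"
  by (induction n) (simp_all add: mult.assoc[symmetric])

lemma spow_per:
  assumes "spow x i = spow x j" "i < j"
  shows "finite (range (spow x))"
proof -
  define d where "d = j - i"
  have per: "spow x (i + m + d) = spow x (i + m)" for m
  proof (induction m)
    case 0 then show ?case using assms unfolding d_def by simp
  next
    case (Suc m)
    have "spow x (i + Suc m + d) = spow x (i + m + d) * x" by (simp add: add.commute add.left_commute)
    also have "\<dots> = spow x (i + m) * x" using Suc by simp
    finally show ?case by simp
  qed
  have "spow x n \<in> spow x ` {..<j}" for n
  proof (induction n rule: less_induct)
    case (less n)
    show ?case
    proof (cases "n < j")
      case True then show ?thesis by blast
    next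
      case False
      then have "n = i + (n - d - i) + d" "n - d < n" using assms unfolding d_def by auto
      then have "spow x n = spow x (n - d)" using per[of "n - d - i"] by (metis add_diff_cancel_right')
      then show ?thesis using less \<open>n - d < n\<close> by simp
    qed
  qed
  then have "range (spow x) \<subseteq> spow x ` {..<j}" by blast
  then show ?thesis using finite_subset by blast
qed

lemma spow_inj:
  assumes "infinite (range (spow x))" shows "inj (spow x)"
proof (rule injI, rule ccontr)
  fix i j assume e: "spow x i = spow x j" "i \<noteq> j"
  then show False
    using spow_per[of x i j] spow_per[of x j i] assms by (cases "i < j") auto
qed

lemma val_unique:
  fixes N :: nat
  assumes "N mod 2^(j+1) = 2^j" "N mod 2^(j'+1) = 2^j'" "j < j'"
  shows False
proof -
  have "(2::nat)^(j+1) dvd 2^(j'+1)" by (rule le_imp_power_dvd) (use assms in auto)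
  then have "N mod 2^(j+1) = (N mod 2^(j'+1)) mod 2^(j+1)" by (simp add: mod_mod_cancel)
  also have "\<dots> = 2^j' mod 2^(j+1)" using assms by simp
  also have "\<dots> = 0"
  proof -
    have "(2::nat)^(j+1) dvd 2^j'" by (rule le_imp_power_dvd) (use assms in simp)
    then show ?thesis by simp
  qed
  finally show False using assms by simp
qed

context
  fixes x :: "'a::semigroup_mult"
begin

definition gg :: "nat \<Rightarrow> 'a" where "gg N = spow x (N - 1)"

lemma gg_mul: "0 < M \<Longrightarrow> 0 < N \<Longrightarrow> gg M * gg N = gg (M + N)"
proof -
  assume "0 < M" "0 < N"
  then have "M - 1 + (N - 1) + 1 = M + N - 1" by simp
  then show ?thesis unfolding gg_def by (simp only: spow_add)
qed

definition Ev :: "nat \<Rightarrow> nat \<Rightarrow> 'a set" where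
  "Ev r k = gg ` {N. 2^k dvd N \<and> (\<exists>j. j mod 2 = r \<and> N mod 2^(j+1) = 2^j)}"

lemma Ev_ne: "r < 2 \<Longrightarrow> Ev r k \<noteq> {}"
proof -
  assume r: "r < 2"
  have "(2::nat)^k dvd 2^(2*k+r)" by (rule le_imp_power_dvd) simp
  moreover have "(2::nat)^(2*k+r) mod 2^(2*k+r+1) = 2^(2*k+r)" by simp
  moreover have "(2*k+r) mod 2 = r" using r by simp
  ultimately have "gg (2^(2*k+r)) \<in> Ev r k" unfolding Ev_def by blast
  then show ?thesis by blast
qed

lemma Ev_mono: "k \<le> k' \<Longrightarrow> Ev r k' \<subseteq> Ev r k"
  unfolding Ev_def using le_imp_power_dvd dvd_trans by blast

lemma Ev_uf: "r < 2 \<Longrightarrow> ucl (range (Ev r)) \<noteq> {}"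
proof -
  assume r: "r < 2"
  have "\<exists>p. is_ultrafilter p \<and> range (Ev r) \<subseteq> p"
  proof (rule uf_exists)
    show "range (Ev r) \<noteq> {}" by blast
    show "{} \<notin> range (Ev r)" using Ev_ne[OF r] by (metis imageE)
    fix A B assume "A \<in> range (Ev r)" "B \<in> range (Ev r)"
    then obtain k k' where "A = Ev r k" "B = Ev r k'" by blast
    then have "Ev r (max k k') \<subseteq> A \<inter> B" using Ev_mono by (metis Int_subset_iff max.cobounded1 max.cobounded2)
    then show "\<exists>C\<in>range (Ev r). C \<subseteq> A \<inter> B" by blast
  qed
  then show ?thesis unfolding ucl_def by blast
qed

lemma Ev_mul:
  assumes p: "p \<in> ucl (range (Ev r))" and q: "q \<in> ucl (range (Ev s))"
  shows "Ev r k \<in> ult_mult p q"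
proof -
  have pu: "is_ultrafilter p" and qu: "is_ultrafilter q" using p q unfolding ucl_def by auto
  have "Ev r k \<subseteq> {a. lsh (Ev r k) a \<in> q}"
  proof
    fix a assume "a \<in> Ev r k"
    then obtain N j where N: "a = gg N" "2^k dvd N" "j mod 2 = r" "N mod 2^(j+1) = 2^j" unfolding Ev_def by blast
    have "Ev s (j+k+1) \<subseteq> lsh (Ev r k) a"
    proof
      fix b assume "b \<in> Ev s (j+k+1)"
      then obtain M j' where M: "b = gg M" "2^(j+k+1) dvd M" "M mod 2^(j'+1) = 2^j'" unfolding Ev_def by blast
      have "N \<noteq> 0" using N(4) by (metis mod_0 power_not_zero zero_neq_numeral)
      moreover have "M \<noteq> 0" using M(3) by (metis mod_0 power_not_zero zero_neq_numeral)
      ultimately have ab: "a * b = gg (N + M)" using gg_mul N(1) M(1) by simp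
      have d1: "(2::nat)^k dvd 2^(j+k+1)" "(2::nat)^(j+1) dvd 2^(j+k+1)" by (simp_all add: le_imp_power_dvd)
      have "2^k dvd N + M" using N(2) M(2) d1(1) dvd_trans by (metis dvd_add)
      moreover have "(N + M) mod 2^(j+1) = 2^j"
      proof -
        have "2^(j+1) dvd M" using M(2) d1(2) dvd_trans by blast
        then have "(N + M) mod 2^(j+1) = N mod 2^(j+1)" by (metis dvd_imp_mod_0 mod_add_eq add.right_neutral mod_mod_trivial)
        then show ?thesis using N(4) by simp
      qed
      ultimately have "gg (N + M) \<in> Ev r k" unfolding Ev_def using N(3) by blast
      then show "b \<in> lsh (Ev r k) a" unfolding lsh_def using ab by simp
    qed
    moreover have "Ev s (j+k+1) \<in> q" using q unfolding ucl_def by blast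
    ultimately show "a \<in> {a. lsh (Ev r k) a \<in> q}" using uf_up[OF qu] by blast
  qed
  moreover have "Ev r k \<in> p" using p unfolding ucl_def by blast
  ultimately show ?thesis using mult_mem[OF pu qu] uf_up[OF pu] by blast
qed

lemma Ev_disj:
  assumes "inj (spow x)" shows "Ev 0 0 \<inter> Ev 1 0 = {}"
proof (rule ccontr)
  assume "Ev 0 0 \<inter> Ev 1 0 \<noteq> {}"
  then obtain a where a: "a \<in> Ev 0 0" "a \<in> Ev 1 0" by blast
  obtain N where N0: "a = gg N" "N \<in> {N. 2^0 dvd N \<and> (\<exists>j. j mod 2 = (0::nat) \<and> N mod 2^(j+1) = 2^j)}"
    using a(1) unfolding Ev_def apply (rule imageE) apply (rule that) apply assumption apply assumption done
  have "\<exists>j. j mod 2 = (0::nat) \<and> N mod 2^(j+1) = 2^j" using N0(2) by (simp only: mem_Collect_eq)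
  then obtain j where n: "a = gg N" "j mod 2 = 0" "N mod 2^(j+1) = 2^j" using N0(1) by (elim exE conjE) simp
  obtain N' where N1: "a = gg N'" "N' \<in> {N. 2^0 dvd N \<and> (\<exists>j. j mod 2 = (1::nat) \<and> N mod 2^(j+1) = 2^j)}"
    using a(2) unfolding Ev_def apply (rule imageE) apply (rule that) apply assumption apply assumption done
  have "\<exists>j. j mod 2 = (1::nat) \<and> N' mod 2^(j+1) = 2^j" using N1(2) by (simp only: mem_Collect_eq)
  then obtain j' where n': "a = gg N'" "j' mod 2 = 1" "N' mod 2^(j'+1) = 2^j'" using N1(1) by (elim exE conjE) simp
  have e: "gg N = gg N'" "j mod 2 = 0" "N mod 2^(j+1) = 2^j"
     "j' mod 2 = 1" "N' mod 2^(j'+1) = 2^j'" using n n' by auto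
  have "N \<noteq> 0" using e(3) by (metis mod_0 power_not_zero zero_neq_numeral)
  moreover have "N' \<noteq> 0" using e(5) by (metis mod_0 power_not_zero zero_neq_numeral)
  moreover have "N - 1 = N' - 1" using e(1) assms unfolding gg_def inj_def by blast
  ultimately have "N = N'" by simp
  moreover have "j \<noteq> j'" using e by auto
  ultimately show False using val_unique e by (metis nat_neq_iff)
qed

end

lemma cyclic_finite:
  fixes x :: "'a::semigroup_mult"
  assumes H: "\<forall>p q :: 'a set set. ult_idempotent p \<and> ult_idempotent q
             \<longrightarrow> ult_mult p q = ult_mult q p"
  shows "finite (range (spow x))"
proof (rule ccontr)
  assume "infinite (range (spow x))"
  then have inj: "inj (spow x)" by (rule spow_inj)
  have sg: "sgcl (ucl (range (Ev x r)))" for r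
    unfolding sgcl_def
  proof (intro ballI)
    fix p q assume pq: "p \<in> ucl (range (Ev x r))" "q \<in> ucl (range (Ev x r))"
    then have "is_ultrafilter (ult_mult p q)" using mult_uf unfolding ucl_def by blast
    moreover have "range (Ev x r) \<subseteq> ult_mult p q" using Ev_mul[OF pq] by blast
    ultimately show "ult_mult p q \<in> ucl (range (Ev x r))" unfolding ucl_def by blast
  qed
  have n0: "ucl (range (Ev x 0)) \<noteq> {}" and n1: "ucl (range (Ev x 1)) \<noteq> {}" using Ev_uf[of 0 x] Ev_uf[of 1 x] by auto
  obtain p where p: "p \<in> ucl (range (Ev x 0))" "ult_mult p p = p" using EN[OF n0 sg] by auto
  obtain q where q: "q \<in> ucl (range (Ev x 1))" "ult_mult q q = q" using EN[OF n1 sg] by auto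
  have "ult_idempotent p" "ult_idempotent q" using p q unfolding ult_idempotent_def ucl_def by auto
  then have e: "ult_mult p q = ult_mult q p" using H by blast
  have "Ev x 0 0 \<in> ult_mult p q" using Ev_mul[OF p(1) q(1)] .
  moreover have "Ev x 1 0 \<in> ult_mult p q" using Ev_mul[OF q(1) p(1)] e by simp
  moreover have "is_ultrafilter (ult_mult p q)" using p q mult_uf unfolding ucl_def by blast
  ultimately have "{} \<in> ult_mult p q" using Ev_disj[OF inj] uf_int by metis
  then show False using uf_empty \<open>is_ultrafilter (ult_mult p q)\<close> by blast
qed

theorem proposition2p1:
  fixes X_type :: "'a::semigroup_mult itself"
  assumes "\<forall>p q :: 'a set set. ult_idempotent p \<and> ult_idempotent q
             \<longrightarrow> ult_mult p q = ult_mult q p"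
  shows "(\<forall>S :: 'a set. subsemigroup S \<and> cyclic_semigroup S \<longrightarrow> finite S) \<and>
         (\<forall>S :: 'a set. subsemigroup S \<and> linear_semigroup S \<longrightarrow> finite S)"
  using cyclic_finite[OF assms] linear_finite[OF assms] unfolding cyclic_semigroup_def by auto

end
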